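(* The group $\operatorname{Homeo}_c(\mathbb{R})$ of compactly supported homeomorphisms of $\mathbb{R}$ is not mitotic.
   Context: A subgroup $H \leq \Gamma$ has a mitosis in $\Gamma$ if there are elements $s,d \in \Gamma$ such that $h\cdot s^{-1}hs = d^{-1}hd$ for all $h \in H$ and $[h, s^{-1}h's] = 1$ for all $h,h' \in H$. A group $\Gamma$ is mitotic if every finitely generated subgroup of $\Gamma$ has a mitosis in $\Gamma$. *)

theory Defs
  imports "HOL-Analysis.Analysis" "HOL-Algebra.Generated_Groups"
begin

definition commutator :: "('a, 'b) monoid_scheme \<Rightarrow> 'a \<Rightarrow> 'a \<Rightarrow> 'a" where
  "commutator G a b = inv\<^bsub>G\<^esub> a \<otimes>\<^bsub>G\<^esub> inv\<^bsub>G\<^esub> b \<otimes>\<^bsub>G\<^esub> a \<otimes>\<^bsub>G\<^esub> b"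

definition has_mitosis :: "('a, 'b) monoid_scheme \<Rightarrow> 'a set \<Rightarrow> bool" where
  "has_mitosis G H \<longleftrightarrow> (\<exists>s\<in>carrier G. \<exists>d\<in>carrier G.
     (\<forall>h\<in>H. h \<otimes>\<^bsub>G\<^esub> (inv\<^bsub>G\<^esub> s \<otimes>\<^bsub>G\<^esub> h \<otimes>\<^bsub>G\<^esub> s)
              = inv\<^bsub>G\<^esub> d \<otimes>\<^bsub>G\<^esub> h \<otimes>\<^bsub>G\<^esub> d) \<and>
     (\<forall>h\<in>H. \<forall>h'\<in>H.
        commutator G h (inv\<^bsub>G\<^esub> s \<otimes>\<^bsub>G\<^esub> h' \<otimes>\<^bsub>G\<^esub> s) = \<one>\<^bsub>G\<^esub>))"

definition mitotic :: "('a, 'b) monoid_scheme \<Rightarrow> bool" where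
  "mitotic G \<longleftrightarrow> (\<forall>H. subgroup H G \<and>
      (\<exists>S. finite S \<and> S \<subseteq> carrier G \<and> H = generate G S) \<longrightarrow> has_mitosis G H)"

definition homeo_c :: "(real \<Rightarrow> real) set" where
  "homeo_c = {f. homeomorphism UNIV UNIV f (Hilbert_Choice.inv f) \<and> compact (closure {x. f x \<noteq> x})}"

definition Homeo_c_group :: "(real \<Rightarrow> real) monoid" where
  "Homeo_c_group = \<lparr>carrier = homeo_c, mult = (\<lambda>f g. f \<circ> g), one = id\<rparr>"

end

theory Submission
  imports Defs
begin

abbreviation hinv :: "(real \<Rightarrow> real) \<Rightarrow> real \<Rightarrow> real" where "hinv \<equiv> Hilbert_Choice.inv"

lemma hc_bij: "f \<in> homeo_c \<Longrightarrow> bij f"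
  unfolding homeo_c_def homeomorphism_def
  by (auto intro!: bij_betw_byWitness[where f'="hinv f"])

lemma hc_cont: "f \<in> homeo_c \<Longrightarrow> continuous_on UNIV f"
  unfolding homeo_c_def homeomorphism_def by auto

lemma hc_bounded: assumes "f \<in> homeo_c" obtains B where "\<And>x. \<bar>x\<bar> > B \<Longrightarrow> f x = x"
proof -
  have "compact (closure {x. f x \<noteq> x})" using assms unfolding homeo_c_def by auto
  then have "bounded {x. f x \<noteq> x}" using compact_closure by blast
  then obtain B where B: "\<forall>x\<in>{x. f x \<noteq> x}. \<bar>x\<bar> \<le> B"
    unfolding bounded_real by blast
  show ?thesis
  proof (rule that)
    fix x assume "\<bar>x\<bar> > B"
    then show "f x = x" using B by force
  qed
qed

lemma hc_mono: assumes "f \<in> homeo_c" shows "strict_mono f"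
proof -
  have "strict_mono_on UNIV f \<or> strict_antimono_on UNIV f"
    using injective_eq_monotone_map[of UNIV f] hc_cont[OF assms] hc_bij[OF assms]
    by (simp add: bij_is_inj)
  moreover obtain B where B: "\<And>x. \<bar>x\<bar> > B \<Longrightarrow> f x = x" using hc_bounded assms by blast
  define C where "C = \<bar>B\<bar> + 1"
  have "f C = C" "f (-C) = -C" using B unfolding C_def by auto
  moreover have "-C < C" unfolding C_def by auto
  ultimately show ?thesis
  proof (elim disjE)
    assume "strict_antimono_on UNIV f"
    then have "f C < f (-C)" using \<open>-C < C\<close> by (simp add: monotone_on_def)
    then show ?thesis using \<open>f C = C\<close> \<open>f (-C) = -C\<close> \<open>-C < C\<close> by simp
  qed simp
qed

lemma hc_inv: assumes "f \<in> homeo_c" shows "hinv f \<in> homeo_c"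
proof -
  have bf: "bij f" using hc_bij assms .
  have h: "homeomorphism UNIV UNIV f (hinv f)" using assms unfolding homeo_c_def by auto
  have "homeomorphism UNIV UNIV (hinv f) (hinv (hinv f))"
    using homeomorphism_sym[THEN iffD1, OF h] by (simp add: inv_inv_eq bf)
  moreover have "{x. hinv f x \<noteq> x} = {x. f x \<noteq> x}"
  proof -
    have "\<And>x. hinv f x = x \<longleftrightarrow> f x = x" using bij_inv_eq_iff[OF bf] by metis
    then show ?thesis by auto
  qed
  ultimately show ?thesis using assms unfolding homeo_c_def by auto
qed

lemma hc_comp: assumes "f \<in> homeo_c" "g \<in> homeo_c" shows "f \<circ> g \<in> homeo_c"
proof -
  have bf: "bij f" "bij g" using hc_bij assms by auto
  have "homeomorphism UNIV UNIV f (hinv f)" "homeomorphism UNIV UNIV g (hinv g)"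
    using assms unfolding homeo_c_def by auto
  then have "homeomorphism UNIV UNIV (f \<circ> g) (hinv g \<circ> hinv f)"
    using homeomorphism_compose by blast
  then have 1: "homeomorphism UNIV UNIV (f \<circ> g) (hinv (f \<circ> g))"
    by (simp add: o_inv_distrib bf)
  have "bounded {x. f x \<noteq> x}" "bounded {x. g x \<noteq> x}"
    using assms unfolding homeo_c_def compact_closure by auto
  then have "bounded ({x. f x \<noteq> x} \<union> {x. g x \<noteq> x})" by auto
  moreover have "{x. (f \<circ> g) x \<noteq> x} \<subseteq> {x. f x \<noteq> x} \<union> {x. g x \<noteq> x}" by auto
  ultimately have "bounded {x. (f \<circ> g) x \<noteq> x}" using bounded_subset by blast
  then show ?thesis using 1 unfolding homeo_c_def compact_closure by auto
qed

lemma hc_id: "id \<in> homeo_c"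
  unfolding homeo_c_def homeomorphism_def by auto

lemma grp: "group Homeo_c_group"
proof (rule groupI)
  fix x y z assume "x \<in> carrier Homeo_c_group" "y \<in> carrier Homeo_c_group" "z \<in> carrier Homeo_c_group"
  show "x \<otimes>\<^bsub>Homeo_c_group\<^esub> y \<in> carrier Homeo_c_group"
    using \<open>x \<in> _\<close> \<open>y \<in> _\<close> by (simp add: Homeo_c_group_def hc_comp)
  show "x \<otimes>\<^bsub>Homeo_c_group\<^esub> y \<otimes>\<^bsub>Homeo_c_group\<^esub> z = x \<otimes>\<^bsub>Homeo_c_group\<^esub> (y \<otimes>\<^bsub>Homeo_c_group\<^esub> z)"
    by (simp add: Homeo_c_group_def o_assoc)
next
  show "\<one>\<^bsub>Homeo_c_group\<^esub> \<in> carrier Homeo_c_group" by (simp add: Homeo_c_group_def hc_id)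
next
  fix x assume x: "x \<in> carrier Homeo_c_group"
  show "\<one>\<^bsub>Homeo_c_group\<^esub> \<otimes>\<^bsub>Homeo_c_group\<^esub> x = x" by (simp add: Homeo_c_group_def)
  have "hinv x \<in> homeo_c" "hinv x \<circ> x = id" using x by (auto simp: Homeo_c_group_def hc_inv bij_is_inj hc_bij)
  then show "\<exists>y\<in>carrier Homeo_c_group. y \<otimes>\<^bsub>Homeo_c_group\<^esub> x = \<one>\<^bsub>Homeo_c_group\<^esub>"
    by (auto simp: Homeo_c_group_def)
qed

lemma inv_G: "f \<in> homeo_c \<Longrightarrow> inv\<^bsub>Homeo_c_group\<^esub> f = hinv f"
  by (rule group.inv_equality[OF grp]) (simp_all add: Homeo_c_group_def hc_inv bij_is_inj hc_bij)


lemma pres_le: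
  fixes a :: "real \<Rightarrow> real"
  assumes sm: "strict_mono a" and su: "surj a" and pq: "p < q"
    and M: "\<And>x. (p < x \<and> x < q) \<longleftrightarrow> (p < a x \<and> a x < q)"
  shows "a p \<le> p \<and> q \<le> a q"
proof (rule ccontr)
  assume nt: "\<not> (a p \<le> p \<and> q \<le> a q)"
  define y where "y = (p + q) / 2"
  obtain z where z: "a z = y" using su by (metis surjD)
  have yM: "p < y \<and> y < q" using pq unfolding y_def by auto
  then have zM: "p < z \<and> z < q" using M[of z] z by auto
  show False
  proof (cases "a p > p")
    case True
    then have "a p \<ge> q" using M[of p] by auto
    moreover have "a p < a z" using zM sm by (simp add: strict_mono_less)
    ultimately show False using z yM by auto
  next
    case False
    then have "a q < q" using nt by auto
    then have "a q \<le> p" using M[of q] by auto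
    moreover have "a z < a q" using zM sm by (simp add: strict_mono_less)
    ultimately show False using z yM by auto
  qed
qed

lemma pres_eq:
  fixes a :: "real \<Rightarrow> real"
  assumes sm: "strict_mono a" and su: "surj a" and pq: "p < q"
    and M: "\<And>x. (p < x \<and> x < q) \<longleftrightarrow> (p < a x \<and> a x < q)"
  shows "a p = p \<and> a q = q"
proof -
  have inj: "inj a" using sm strict_mono_imp_inj_on by blast
  define b where "b = hinv a"
  have ab: "\<And>y. a (b y) = y" unfolding b_def using su by (simp add: surj_f_inv_f)
  have ba: "\<And>x. b (a x) = x" unfolding b_def using inj by simp
  have smb: "strict_mono b"
    unfolding strict_mono_def
  proof (intro allI impI)
    fix x y :: real assume "x < y"
    show "b x < b y"
    proof (rule ccontr)
      assume "\<not> b x < b y"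
      then have "a (b y) \<le> a (b x)" using sm by (simp add: strict_mono_less_eq)
      then show False using ab \<open>x < y\<close> by simp
    qed
  qed
  have sub: "surj b" using ba by (metis surjI)
  have Mb: "\<And>x. (p < x \<and> x < q) \<longleftrightarrow> (p < b x \<and> b x < q)" using M ab by metis
  have 1: "a p \<le> p \<and> q \<le> a q" using pres_le[OF sm su pq M] .
  have 2: "b p \<le> p \<and> q \<le> b q" using pres_le[OF smb sub pq Mb] .
  have "p \<le> a p" using 2 sm ab by (metis strict_mono_less_eq)
  moreover have "a q \<le> q" using 2 sm ab by (metis strict_mono_less_eq)
  ultimately show ?thesis using 1 by auto
qed

lemma comm_pres:
  fixes a c :: "real \<Rightarrow> real"
  assumes sm: "strict_mono a" and su: "surj a" and pq: "p < q"
    and Mc: "\<And>x. c x \<noteq> x \<longleftrightarrow> (p < x \<and> x < q)"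
    and comm: "\<And>x. a (c x) = c (a x)"
  shows "a p = p \<and> a q = q"
proof (rule pres_eq[OF sm su pq])
  have inj: "inj a" using sm strict_mono_imp_inj_on by blast
  fix x
  have "c x = x \<longleftrightarrow> c (a x) = a x"
    using comm inj by (metis injD)
  then show "(p < x \<and> x < q) \<longleftrightarrow> (p < a x \<and> a x < q)" using Mc[of x] Mc[of "a x"] by blast
qed

definition af :: "real \<Rightarrow> real \<Rightarrow> real" where
  "af t x = x + max 0 (min (x - t) (t + 1 - x)) / 2"
definition afi :: "real \<Rightarrow> real \<Rightarrow> real" where
  "afi t y = y - max 0 (min ((y - t) / 3) (t + 1 - y))"
lemma af_alt: "af t x = (if x \<le> t then x else if x \<le> t + 1/2 then x + (x - t)/2 else if x \<le> t + 1 then x + (t + 1 - x)/2 else x)"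
  unfolding af_def by (auto simp: max_def min_def)
lemma afi_alt: "afi t y = (if y \<le> t then y else if y \<le> t + 3/4 then y - (y - t)/3 else if y \<le> t + 1 then y - (t + 1 - y) else y)"
  unfolding afi_def by (auto simp: max_def min_def)
lemma af_inv1: "afi t (af t x) = x"
  unfolding af_alt afi_alt by (auto simp: field_simps)
lemma af_inv2: "af t (afi t y) = y"
  unfolding af_alt afi_alt by (auto simp: field_simps)
lemma af_moved: "af t x \<noteq> x \<longleftrightarrow> (t < x \<and> x < t + 1)"
  unfolding af_alt by auto
lemma af_ge: "x \<le> af t x"
  unfolding af_def by simp

lemma af_hc: "af t \<in> homeo_c"
proof -
  have c1: "continuous_on UNIV (af t)" unfolding af_def by (intro continuous_intros) auto
  have c2: "continuous_on UNIV (afi t)" unfolding afi_def by (intro continuous_intros) auto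
  have hi: "hinv (af t) = afi t" by (rule inv_equality) (simp_all add: af_inv1 af_inv2)
  have "homeomorphism UNIV UNIV (af t) (afi t)"
  proof -
    have "surj (af t)" using af_inv2 by (rule surjI)
    moreover have "surj (afi t)" using af_inv1 by (rule surjI)
    ultimately show ?thesis unfolding homeomorphism_def using c1 c2 af_inv1 af_inv2 by simp
  qed
  moreover have "bounded {x. af t x \<noteq> x}"
  proof -
    have "{x. af t x \<noteq> x} \<subseteq> {t..t+1}" by (auto simp: af_moved)
    then show ?thesis using bounded_subset[OF bounded_closed_interval] by blast
  qed
  ultimately show ?thesis by (simp add: homeo_c_def compact_closure hi)
qed


lemma comm_of: assumes "h \<in> homeo_c" "k \<in> homeo_c"
  and "commutator Homeo_c_group h k = \<one>\<^bsub>Homeo_c_group\<^esub>"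
shows "h (k x) = k (h x)"
proof -
  have bh: "bij h" and bk: "bij k" using assms hc_bij by auto
  have eq: "hinv h \<circ> hinv k \<circ> h \<circ> k = id"
    using assms(3) by (simp add: commutator_def inv_G assms(1,2)) (simp add: Homeo_c_group_def)
  have "hinv h (hinv k (h (k x))) = x" using fun_cong[OF eq, of x] by simp
  then have "h (hinv h (hinv k (h (k x)))) = h x" by simp
  then have "hinv k (h (k x)) = h x" using bh by (simp add: bij_is_surj surj_f_inv_f)
  then have "k (hinv k (h (k x))) = k (h x)" by simp
  then show ?thesis using bk by (simp add: bij_is_surj surj_f_inv_f)
qed

theorem lemma3p18:
  shows "\<not> mitotic Homeo_c_group"
proof
  assume mit: "mitotic Homeo_c_group"
  define G where "G = Homeo_c_group"
  define a where "a = af 0"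
  define b where "b = af (-1/2)"
  have aG: "a \<in> homeo_c" and bG: "b \<in> homeo_c" unfolding a_def b_def by (simp_all add: af_hc)
  define H where "H = generate G {a, b}"
  have cG: "carrier G = homeo_c" unfolding G_def Homeo_c_group_def by simp
  have "subgroup H G" unfolding H_def G_def
    by (rule group.generate_is_subgroup[OF grp]) (simp add: aG bG Homeo_c_group_def)
  moreover have "\<exists>S. finite S \<and> S \<subseteq> carrier G \<and> H = generate G S"
    by (rule exI[of _ "{a,b}"]) (simp add: H_def cG aG bG)
  ultimately have "has_mitosis G H" using mit unfolding mitotic_def G_def by blast
  then obtain s d where sG: "s \<in> homeo_c" and dG: "d \<in> homeo_c"
    and A: "\<And>h. h \<in> H \<Longrightarrow> h \<otimes>\<^bsub>G\<^esub> (inv\<^bsub>G\<^esub> s \<otimes>\<^bsub>G\<^esub> h \<otimes>\<^bsub>G\<^esub> s)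
              = inv\<^bsub>G\<^esub> d \<otimes>\<^bsub>G\<^esub> h \<otimes>\<^bsub>G\<^esub> d"
    and B: "\<And>h h'. h \<in> H \<Longrightarrow> h' \<in> H \<Longrightarrow>
        commutator G h (inv\<^bsub>G\<^esub> s \<otimes>\<^bsub>G\<^esub> h' \<otimes>\<^bsub>G\<^esub> s) = \<one>\<^bsub>G\<^esub>"
    unfolding has_mitosis_def cG by blast
  have aH: "a \<in> H" and bH: "b \<in> H" unfolding H_def by (auto intro: generate.incl)
  define c where "c = hinv s \<circ> a \<circ> s"
  have cG': "c \<in> homeo_c" unfolding c_def using sG aG by (simp add: hc_comp hc_inv)
  have c_eq: "inv\<^bsub>G\<^esub> s \<otimes>\<^bsub>G\<^esub> a \<otimes>\<^bsub>G\<^esub> s = c"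
    unfolding c_def G_def by (simp add: inv_G sG) (simp add: Homeo_c_group_def)
  have "commutator Homeo_c_group a c = \<one>\<^bsub>Homeo_c_group\<^esub>"
    using B[OF aH aH] c_eq unfolding G_def by simp
  then have comm_a: "\<And>x. a (c x) = c (a x)" using comm_of[OF aG cG'] by blast
  have "commutator Homeo_c_group b c = \<one>\<^bsub>Homeo_c_group\<^esub>"
    using B[OF bH aH] c_eq unfolding G_def by simp
  then have comm_b: "\<And>x. b (c x) = c (b x)" using comm_of[OF bG cG'] by blast
  have Aa: "a \<circ> c = hinv d \<circ> a \<circ> d"
    using A[OF aH] c_eq unfolding G_def by (simp add: inv_G dG) (simp add: Homeo_c_group_def)
  have sms: "strict_mono s" using hc_mono sG by blast
  have bs: "bij s" using hc_bij sG by blast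
  have smsi: "strict_mono (hinv s)" using hc_mono hc_inv sG by blast
  have si1: "\<And>x. hinv s (s x) = x" using bs by (simp add: bij_is_inj)
  have si2: "\<And>x. s (hinv s x) = x" using bs by (simp add: bij_is_surj surj_f_inv_f)
  have smd: "strict_mono (hinv d)" using hc_mono hc_inv dG by blast
  have bd: "bij d" using hc_bij dG by blast
  have di1: "\<And>x. hinv d (d x) = x" using bd by (simp add: bij_is_inj)
  have di2: "\<And>x. d (hinv d x) = x" using bd by (simp add: bij_is_surj surj_f_inv_f)
  have sma: "strict_mono a" and sua: "surj a" using aG hc_mono hc_bij bij_is_surj by blast+
  have smb: "strict_mono b" and sub: "surj b" using bG hc_mono hc_bij bij_is_surj by blast+
  have smc: "strict_mono c" and suc: "surj c" using cG' hc_mono hc_bij bij_is_surj by blast+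
  define p where "p = hinv s 0"
  define q where "q = hinv s 1"
  have pq: "p < q" unfolding p_def q_def using smsi by (simp add: strict_mono_less)
  have Ma: "\<And>x. a x \<noteq> x \<longleftrightarrow> (0 < x \<and> x < 0 + 1)" unfolding a_def by (rule af_moved)
  have ga: "\<And>x. x \<le> a x" unfolding a_def by (rule af_ge)
  have lt_s: "\<And>u x. (u < s x) \<longleftrightarrow> (hinv s u < x)"
    by (metis si2 sms strict_mono_less)
  have gt_s: "\<And>u x. (s x < u) \<longleftrightarrow> (x < hinv s u)"
    by (metis si2 sms strict_mono_less)
  have Mc: "\<And>x. c x \<noteq> x \<longleftrightarrow> (p < x \<and> x < q)"
  proof -
    fix x
    have "c x \<noteq> x \<longleftrightarrow> a (s x) \<noteq> s x" unfolding c_def using si1 si2 by (metis comp_apply)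
    also have "\<dots> \<longleftrightarrow> (0 < s x \<and> s x < 1)" using Ma by simp
    also have "\<dots> \<longleftrightarrow> (p < x \<and> x < q)" unfolding p_def q_def
      using lt_s[of 0 x] gt_s[of x 1] by simp
    finally show "c x \<noteq> x \<longleftrightarrow> (p < x \<and> x < q)" .
  qed
  have gc: "\<And>x. x \<le> c x"
  proof -
    fix x
    have "s x \<le> a (s x)" by (rule ga)
    then have "hinv s (s x) \<le> hinv s (a (s x))" using smsi by (simp add: strict_mono_less_eq)
    then show "x \<le> c x" unfolding c_def using si1 by simp
  qed
  have 1: "a p = p \<and> a q = q" by (rule comm_pres[OF sma sua pq Mc comm_a])
  have 2: "c 0 = 0 \<and> c 1 = 1" using comm_pres[OF smc suc _ Ma] comm_a by simp
  have 3: "b p = p" using comm_pres[OF smb sub pq Mc comm_b] by simp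
  define e where "e = hinv d 0"
  define f where "f = hinv d 1"
  have Mac: "\<And>x. a (c x) \<noteq> x \<longleftrightarrow> ((0 < x \<and> x < 1) \<or> (p < x \<and> x < q))"
  proof -
    fix x
    have "a (c x) = x \<longleftrightarrow> (c x = x \<and> a x = x)"
      using ga gc by (metis order.trans order_antisym)
    then show "a (c x) \<noteq> x \<longleftrightarrow> ((0 < x \<and> x < 1) \<or> (p < x \<and> x < q))"
      using Ma[of x] Mc[of x] by auto
  qed
  have smd': "strict_mono d" using hc_mono dG by blast
  have lt_d: "\<And>u x. (u < d x) \<longleftrightarrow> (hinv d u < x)"
    by (metis di2 smd' strict_mono_less)
  have gt_d: "\<And>u x. (d x < u) \<longleftrightarrow> (x < hinv d u)"
    by (metis di2 smd' strict_mono_less)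
  have Md: "\<And>x. a (c x) \<noteq> x \<longleftrightarrow> (e < x \<and> x < f)"
  proof -
    fix x
    have "a (c x) = hinv d (a (d x))" using fun_cong[OF Aa, of x] by simp
    then have "a (c x) \<noteq> x \<longleftrightarrow> a (d x) \<noteq> d x" using di1 di2 by metis
    also have "\<dots> \<longleftrightarrow> (0 < d x \<and> d x < 1)" using Ma by simp
    also have "\<dots> \<longleftrightarrow> (e < x \<and> x < f)" unfolding e_def f_def
      using lt_d[of 0 x] gt_d[of x 1] by simp
    finally show "a (c x) \<noteq> x \<longleftrightarrow> (e < x \<and> x < f)" .
  qed
  have E: "\<And>x. ((0 < x \<and> x < 1) \<or> (p < x \<and> x < q)) \<longleftrightarrow> (e < x \<and> x < f)"
    using Mac Md by blast
  have n1: "\<not> (0 < p \<and> p < 1)" "\<not> (0 < q \<and> q < 1)" using 1 Ma by auto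
  have n2: "\<not> (p < 0 \<and> 0 < q)" "\<not> (p < 1 \<and> 1 < q)" using 2 Mc by auto
  have e1: "e < 1/2 \<and> 1/2 < f" using E[of "1/2"] by auto
  have e2: "e < (p+q)/2 \<and> (p+q)/2 < f" using E[of "(p+q)/2"] pq by auto
  have e3: "\<not> (e < 0 \<and> 0 < f)" using E[of 0] n2 by auto
  have e4: "\<not> (e < 1 \<and> 1 < f)" using E[of 1] n2 by auto
  have "p = 0"
  proof (rule ccontr)
    assume "p \<noteq> 0"
    then consider "p < 0" | "p > 0" by linarith
    then show False
    proof cases
      case 1
      then have "q \<le> 0" using n2(1) by linarith
      then have "(p+q)/2 < 0" using 1 by (simp add: field_simps)
      then show False using e1 e2 e3 by linarith
    next
      case 2
      then have "p \<ge> 1" using n1(1) by linarith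
      then have "(p+q)/2 > 1" using pq by (simp add: field_simps)
      then show False using e1 e2 e4 by linarith
    qed
  qed
  moreover have "b 0 \<noteq> 0" unfolding b_def af_def by simp
  ultimately show False using 3 by simp
qed

end
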